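(* For every $n\ge 0$, the Wiener index of $S_n$ is \[ \d(S_n)=\frac{2n(2n+1)}{3}\binom{2n-1}{n}, \] and consequently $\d(S_n)\sim \frac{2}{3\sqrt{\pi}}\,4^n n^{3/2}$ as $n\to\infty$.
   Context: $S_n$ is the lattice (under inclusion) of order ideals of the shifted staircase poset $\{(i,j)\in\mathbb Z^2:1\le i\le j\le n\}$ with componentwise order; $|S_n|=2^n$. For a finite poset $Q$, $\d(Q)=\sum_{(p,q)\in Q\times Q}\d(p,q)$ where $\d(p,q)$ is the graph distance in the Hasse diagram of $Q$, summed over ordered pairs. Convention: $\binom{-1}{0}=1$. *)

theory Defs
  imports "HOL-Analysis.Analysis" "HOL-Library.Landau_Symbols"
begin

definition hasse_covers :: "'a set \<Rightarrow> ('a \<Rightarrow> 'a \<Rightarrow> bool) \<Rightarrow> 'a \<Rightarrow> 'a \<Rightarrow> bool" where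
  "hasse_covers Q le x y \<longleftrightarrow> x \<in> Q \<and> y \<in> Q \<and> le x y \<and> x \<noteq> y \<and>
     \<not> (\<exists>z\<in>Q. le x z \<and> le z y \<and> z \<noteq> x \<and> z \<noteq> y)"

definition hasse_adj :: "'a set \<Rightarrow> ('a \<Rightarrow> 'a \<Rightarrow> bool) \<Rightarrow> 'a \<Rightarrow> 'a \<Rightarrow> bool" where
  "hasse_adj Q le x y \<longleftrightarrow> hasse_covers Q le x y \<or> hasse_covers Q le y x"

definition hasse_walk :: "'a set \<Rightarrow> ('a \<Rightarrow> 'a \<Rightarrow> bool) \<Rightarrow> 'a \<Rightarrow> 'a \<Rightarrow> nat \<Rightarrow> bool" where
  "hasse_walk Q le x y k \<longleftrightarrow>
     (\<exists>f :: nat \<Rightarrow> 'a. f 0 = x \<and> f k = y \<and> (\<forall>i<k. hasse_adj Q le (f i) (f (Suc i))))"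

definition hasse_dist :: "'a set \<Rightarrow> ('a \<Rightarrow> 'a \<Rightarrow> bool) \<Rightarrow> 'a \<Rightarrow> 'a \<Rightarrow> nat" where
  "hasse_dist Q le x y = (LEAST k. hasse_walk Q le x y k)"

definition wiener :: "'a set \<Rightarrow> ('a \<Rightarrow> 'a \<Rightarrow> bool) \<Rightarrow> nat" where
  "wiener Q le = (\<Sum>(p, q)\<in>Q \<times> Q. hasse_dist Q le p q)"

definition shifted_staircase :: "nat \<Rightarrow> (nat \<times> nat) set" where
  "shifted_staircase n = {(i, j). 1 \<le> i \<and> i \<le> j \<and> j \<le> n}"

definition comp_le :: "nat \<times> nat \<Rightarrow> nat \<times> nat \<Rightarrow> bool" where
  "comp_le p q \<longleftrightarrow> fst p \<le> fst q \<and> snd p \<le> snd q"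

definition order_ideal :: "(nat \<times> nat) set \<Rightarrow> (nat \<times> nat) set \<Rightarrow> bool" where
  "order_ideal P I \<longleftrightarrow> I \<subseteq> P \<and> (\<forall>x\<in>I. \<forall>y\<in>P. comp_le y x \<longrightarrow> y \<in> I)"

definition S :: "nat \<Rightarrow> (nat \<times> nat) set set" where
  "S n = {I. order_ideal (shifted_staircase n) I}"

end

theory Submission
  imports Defs
begin


definition sd :: "'a set \<Rightarrow> 'a set \<Rightarrow> 'a set" where "sd A B = (A - B) \<union> (B - A)"

lemma finite_P: "finite (shifted_staircase n)"
proof -
  have "shifted_staircase n \<subseteq> {1..n} \<times> {1..n}" by (auto simp: shifted_staircase_def)
  thus ?thesis by (rule finite_subset) auto
qed

lemma S_finite: "I \<in> S n \<Longrightarrow> finite I"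
  using finite_P by (auto simp: S_def order_ideal_def intro: finite_subset)

lemma S_ideal: "I \<in> S n \<Longrightarrow> x \<in> I \<Longrightarrow> y \<in> shifted_staircase n \<Longrightarrow> fst y \<le> fst x \<Longrightarrow> snd y \<le> snd x \<Longrightarrow> y \<in> I"
  by (auto simp: S_def order_ideal_def comp_le_def)

lemma S_sub: "I \<in> S n \<Longrightarrow> I \<subseteq> shifted_staircase n"
  by (auto simp: S_def order_ideal_def)

lemma S_intro: "I \<subseteq> shifted_staircase n \<Longrightarrow> (\<And>x y. x \<in> I \<Longrightarrow> y \<in> shifted_staircase n \<Longrightarrow> fst y \<le> fst x \<Longrightarrow> snd y \<le> snd x \<Longrightarrow> y \<in> I) \<Longrightarrow> I \<in> S n"
  by (auto simp: S_def order_ideal_def comp_le_def)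

lemma min_elem:
  fixes A :: "(nat \<times> nat) set"
  assumes "finite A" "A \<noteq> {}"
  shows "\<exists>x\<in>A. \<forall>y\<in>A. fst x + snd x \<le> fst y + snd y"
proof -
  obtain a where "a \<in> A" using assms by auto
  from ex_has_least_nat[of "\<lambda>x. x \<in> A", OF this, of "\<lambda>x. fst x + snd x"] show ?thesis by blast
qed

lemma max_elem:
  fixes A :: "(nat \<times> nat) set"
  assumes "finite A" "A \<noteq> {}"
  shows "\<exists>x\<in>A. \<forall>y\<in>A. fst y + snd y \<le> fst x + snd x"
proof -
  have "finite ((\<lambda>x. fst x + snd x) ` A)" using assms by auto
  then obtain b where b: "\<forall>k\<in>(\<lambda>x. fst x + snd x) ` A. k < b"
    by (auto simp: finite_nat_set_iff_bounded)
  hence b': "\<forall>y. y \<in> A \<longrightarrow> fst y + snd y < b" by auto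
  obtain a where "a \<in> A" using assms by auto
  from Lattices_Big.ex_has_greatest_nat[of "\<lambda>x. x \<in> A", OF this b'] show ?thesis by blast
qed

lemma add_min:
  assumes I: "I \<in> S n" and J: "J \<in> S n" and x: "x \<in> J - I"
    and m: "\<forall>y\<in>J - I. fst x + snd x \<le> fst y + snd y"
  shows "insert x I \<in> S n"
proof (rule S_intro)
  show "insert x I \<subseteq> shifted_staircase n" using S_sub[OF I] S_sub[OF J] x by auto
next
  fix a b assume a: "a \<in> insert x I" and b: "b \<in> shifted_staircase n" "fst b \<le> fst a" "snd b \<le> snd a"
  show "b \<in> insert x I"
  proof (cases "a = x")
    case True
    have xJ: "x \<in> J" using x by simp
    have bJ: "b \<in> J" using S_ideal[OF J xJ b(1)] b(2,3) True by simp
    show ?thesis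
    proof (cases "b = x")
      case False
      hence "fst b \<noteq> fst x \<or> snd b \<noteq> snd x" by (auto simp: prod_eq_iff)
      hence "fst b + snd b < fst x + snd x" using b(2,3) True by auto
      hence "b \<in> I" using m bJ by (meson DiffI not_le)
      thus ?thesis by simp
    qed simp
  next
    case False
    hence "a \<in> I" using a by simp
    thus ?thesis using S_ideal[OF I _ b] by simp
  qed
qed

lemma del_max:
  assumes I: "I \<in> S n" and J: "J \<in> S n" and x: "x \<in> I - J"
    and m: "\<forall>y\<in>I - J. fst y + snd y \<le> fst x + snd x"
  shows "I - {x} \<in> S n"
proof (rule S_intro)
  show "I - {x} \<subseteq> shifted_staircase n" using S_sub[OF I] by auto
next
  fix a b assume a: "a \<in> I - {x}" and b: "b \<in> shifted_staircase n" "fst b \<le> fst a" "snd b \<le> snd a"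
  have bI: "b \<in> I" using S_ideal[OF I _ b] a by auto
  have "b \<noteq> x"
  proof
    assume bx: "b = x"
    have aP: "a \<in> shifted_staircase n" using a S_sub[OF I] by auto
    have "a \<notin> J" using S_ideal[OF J _ b] bx x by auto
    hence "fst a + snd a \<le> fst x + snd x" using m a by auto
    moreover have "a \<noteq> x" using a by auto
    ultimately show False using b bx by (cases a, cases x) auto
  qed
  thus "b \<in> I - {x}" using bI by simp
qed

lemma adj_card:
  assumes "hasse_adj (S n) (\<subseteq>) I J"
  shows "card (sd I J) = 1"
proof -
  have key: "card (sd A B) = 1" if c: "hasse_covers (S n) (\<subseteq>) A B" for A B
  proof -
    from c have A: "A \<in> S n" and B: "B \<in> S n" and AB: "A \<subseteq> B" "A \<noteq> B"
      and no: "\<not> (\<exists>z\<in>S n. A \<subseteq> z \<and> z \<subseteq> B \<and> z \<noteq> A \<and> z \<noteq> B)"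
      unfolding hasse_covers_def by auto
    have "finite (B - A)" "B - A \<noteq> {}" using S_finite[OF B] AB by auto
    then obtain x where x: "x \<in> B - A" and m: "\<forall>y\<in>B - A. fst x + snd x \<le> fst y + snd y"
      using min_elem by blast
    have "insert x A \<in> S n" using add_min[OF A B x m] .
    hence "insert x A = B" using no x AB by auto
    hence "sd A B = {x}" using x by (auto simp: sd_def)
    thus ?thesis by simp
  qed
  have sym: "sd J I = sd I J" by (auto simp: sd_def)
  show ?thesis using assms unfolding hasse_adj_def
  proof
    assume "hasse_covers (S n) (\<subseteq>) J I"
    from key[OF this] sym show ?thesis by simp
  qed (rule key)
qed

lemma sd_tri: "finite (sd A B) \<Longrightarrow> finite (sd B C) \<Longrightarrow> card (sd A C) \<le> card (sd A B) + card (sd B C)"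
proof -
  assume f: "finite (sd A B)" "finite (sd B C)"
  have "sd A C \<subseteq> sd A B \<union> sd B C" by (auto simp: sd_def)
  hence "card (sd A C) \<le> card (sd A B \<union> sd B C)" using f by (intro card_mono) auto
  also have "\<dots> \<le> card (sd A B) + card (sd B C)" by (rule card_Un_le)
  finally show ?thesis .
qed

lemma walk_lower:
  assumes I: "I \<in> S n" and w: "hasse_walk (S n) (\<subseteq>) I J k"
  shows "card (sd I J) \<le> k"
proof -
  from w obtain f where f0: "f 0 = I" and fk: "f k = J" and adj: "\<forall>i<k. hasse_adj (S n) (\<subseteq>) (f i) (f (Suc i))"
    unfolding hasse_walk_def by blast
  have "i \<le> k \<longrightarrow> f i \<in> S n \<and> card (sd I (f i)) \<le> i" for i
  proof (induction i)
    case 0 thus ?case using f0 I by (simp add: sd_def)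
  next
    case (Suc i)
    show ?case
    proof
      assume "Suc i \<le> k"
      hence a: "hasse_adj (S n) (\<subseteq>) (f i) (f (Suc i))" using adj by auto
      hence fS: "f (Suc i) \<in> S n" by (auto simp: hasse_adj_def hasse_covers_def)
      have IH: "f i \<in> S n" "card (sd I (f i)) \<le> i" using Suc \<open>Suc i \<le> k\<close> by auto
      have fin: "finite (sd I (f i))" "finite (sd (f i) (f (Suc i)))"
        using S_finite[OF I] S_finite[OF IH(1)] S_finite[OF fS] by (auto simp: sd_def)
      have "card (sd I (f (Suc i))) \<le> card (sd I (f i)) + card (sd (f i) (f (Suc i)))"
        by (rule sd_tri[OF fin])
      also have "\<dots> \<le> Suc i" using IH adj_card[OF a] by simp
      finally show "f (Suc i) \<in> S n \<and> card (sd I (f (Suc i))) \<le> Suc i" using fS by simp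
    qed
  qed
  thus ?thesis using fk by auto
qed

lemma walk_cons:
  assumes "hasse_adj Q le x y" "hasse_walk Q le y z k"
  shows "hasse_walk Q le x z (Suc k)"
proof -
  from assms(2) obtain f where f: "f 0 = y" "f k = z" "\<forall>i<k. hasse_adj Q le (f i) (f (Suc i))"
    unfolding hasse_walk_def by blast
  define g where "g i = (if i = 0 then x else f (i - 1))" for i
  have "g 0 = x" "g (Suc k) = z" using f by (auto simp: g_def)
  moreover have "\<forall>i<Suc k. hasse_adj Q le (g i) (g (Suc i))"
  proof (intro allI impI)
    fix i assume "i < Suc k"
    show "hasse_adj Q le (g i) (g (Suc i))"
    proof (cases i)
      case 0 thus ?thesis using assms(1) f by (simp add: g_def)
    next
      case (Suc j) thus ?thesis using f \<open>i < Suc k\<close> by (simp add: g_def)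
    qed
  qed
  ultimately show ?thesis unfolding hasse_walk_def by blast
qed

lemma covers_single:
  assumes "A \<in> S n" "B \<in> S n" "B = insert x A" "x \<notin> A"
  shows "hasse_covers (S n) (\<subseteq>) A B"
  using assms unfolding hasse_covers_def by auto

lemma walk_upper:
  assumes "I \<in> S n" "J \<in> S n"
  shows "hasse_walk (S n) (\<subseteq>) I J (card (sd I J))"
  using assms
proof (induction "card (sd I J)" arbitrary: I)
  case 0
  have "finite (sd I J)" using S_finite[OF 0(2)] S_finite[OF 0(3)] by (auto simp: sd_def)
  hence "I = J" using 0(1) by (auto simp: sd_def)
  thus ?case using 0(1) unfolding hasse_walk_def by (intro exI[of _ "\<lambda>_. I"]) auto
next
  case (Suc m)
  have fin: "finite (sd I J)" using S_finite[OF Suc(3)] S_finite[OF Suc(4)] by (auto simp: sd_def)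
  obtain I' x where I': "I' \<in> S n" and adj: "hasse_adj (S n) (\<subseteq>) I I'" and sdI': "sd I' J = sd I J - {x}"
    and xin: "x \<in> sd I J"
  proof (cases "I - J = {}")
    case False
    have "finite (I - J)" using S_finite[OF Suc(3)] by auto
    then obtain x where x: "x \<in> I - J" and m: "\<forall>y\<in>I - J. fst y + snd y \<le> fst x + snd x"
      using max_elem False by blast
    have "I - {x} \<in> S n" by (rule del_max[OF Suc(3,4) x m])
    moreover have "hasse_adj (S n) (\<subseteq>) I (I - {x})"
      unfolding hasse_adj_def using covers_single[OF \<open>I - {x} \<in> S n\<close> Suc(3), of x] x by auto
    moreover have "sd (I - {x}) J = sd I J - {x}" using x by (auto simp: sd_def)
    moreover have "x \<in> sd I J" using x by (auto simp: sd_def)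
    ultimately show ?thesis using that by blast
  next
    case True
    hence ne: "J - I \<noteq> {}" using Suc(2) fin by (auto simp: sd_def)
    have "finite (J - I)" using S_finite[OF Suc(4)] by auto
    then obtain x where x: "x \<in> J - I" and m: "\<forall>y\<in>J - I. fst x + snd x \<le> fst y + snd y"
      using min_elem ne by blast
    have "insert x I \<in> S n" by (rule add_min[OF Suc(3,4) x m])
    moreover have "hasse_adj (S n) (\<subseteq>) I (insert x I)"
      unfolding hasse_adj_def using covers_single[OF Suc(3) \<open>insert x I \<in> S n\<close>, of x] x by auto
    moreover have "sd (insert x I) J = sd I J - {x}" using x by (auto simp: sd_def)
    moreover have "x \<in> sd I J" using x by (auto simp: sd_def)
    ultimately show ?thesis using that by blast
  qed
  have "m = card (sd I' J)" using sdI' Suc(2) xin fin by simp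
  hence "hasse_walk (S n) (\<subseteq>) I' J m" using Suc(1)[OF _ I' Suc(4)] by simp
  from walk_cons[OF adj this] show ?case using Suc(2) by simp
qed

lemma dist_eq:
  assumes "I \<in> S n" "J \<in> S n"
  shows "hasse_dist (S n) (\<subseteq>) I J = card (sd I J)"
  unfolding hasse_dist_def
  by (rule Least_equality) (use walk_upper[OF assms] walk_lower[OF assms(1)] in auto)

lemma wiener_sd: "wiener (S n) (\<subseteq>) = (\<Sum>(I, J)\<in>S n \<times> S n. card (sd I J))"
  unfolding wiener_def by (rule sum.cong) (auto simp: dist_eq)



definition sh :: "(nat \<times> nat) set \<Rightarrow> (nat \<times> nat) set" where
  "sh K = (\<lambda>(i, j). (i, Suc j)) ` K"
definition dg :: "nat \<Rightarrow> (nat \<times> nat) set" where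
  "dg m = (\<lambda>i. (i, i)) ` {1..m}"
definition dset :: "(nat \<times> nat) set \<Rightarrow> nat set" where
  "dset K = {i. (i, i) \<in> K}"
definition nd :: "(nat \<times> nat) set \<Rightarrow> nat" where
  "nd K = card (dset K)"
definition lift :: "(nat \<times> nat) set \<Rightarrow> nat \<Rightarrow> (nat \<times> nat) set" where
  "lift K e = sh K \<union> dg (nd K + e)"
definition unsh :: "(nat \<times> nat) set \<Rightarrow> (nat \<times> nat) set" where
  "unsh I = {(i, j). i \<le> j \<and> (i, Suc j) \<in> I}"

lemma P_iff: "(i, j) \<in> shifted_staircase n \<longleftrightarrow> 1 \<le> i \<and> i \<le> j \<and> j \<le> n"
  by (simp add: shifted_staircase_def)

lemma dset_sub: "K \<in> S n \<Longrightarrow> dset K \<subseteq> {1..n}"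
  using S_sub by (fastforce simp: dset_def P_iff)

lemma nd_le: "K \<in> S n \<Longrightarrow> nd K \<le> n"
  unfolding nd_def using card_mono[OF _ dset_sub] by fastforce

lemma dset_le: assumes K: "K \<in> S n" and a: "a \<in> dset K" shows "a \<le> nd K"
proof -
  have aP: "(a, a) \<in> shifted_staircase n" using a S_sub[OF K] by (auto simp: dset_def)
  have "{1..a} \<subseteq> dset K"
  proof
    fix b assume "b \<in> {1..a}"
    hence "(b, b) \<in> shifted_staircase n" using aP by (auto simp: P_iff)
    hence "(b, b) \<in> K" using S_ideal[OF K _ _] a \<open>b \<in> {1..a}\<close> by (auto simp: dset_def)
    thus "b \<in> dset K" by (simp add: dset_def)
  qed
  hence "card {1..a} \<le> nd K" unfolding nd_def
    using dset_sub[OF K] by (intro card_mono) (auto intro: finite_subset)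
  thus ?thesis by simp
qed

lemma dset_ge: assumes K: "K \<in> S n" and a: "1 \<le> a" "a \<le> nd K" shows "a \<in> dset K"
proof (rule ccontr)
  assume na: "a \<notin> dset K"
  have "dset K \<subseteq> {1..<a}"
  proof
    fix b assume b: "b \<in> dset K"
    have bP: "(b, b) \<in> shifted_staircase n" using b S_sub[OF K] by (auto simp: dset_def)
    show "b \<in> {1..<a}"
    proof (rule ccontr)
      assume "b \<notin> {1..<a}"
      hence "a \<le> b" using bP by (auto simp: P_iff)
      hence "(a, a) \<in> shifted_staircase n" using bP a by (auto simp: P_iff)
      hence "(a, a) \<in> K" using S_ideal[OF K _ _] b \<open>a \<le> b\<close> by (auto simp: dset_def)
      thus False using na by (simp add: dset_def)
    qed
  qed
  hence "nd K \<le> card {1..<a}" unfolding nd_def by (intro card_mono) auto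
  thus False using a by simp
qed

lemma dset_eq: "K \<in> S n \<Longrightarrow> dset K = {1..nd K}"
proof -
  assume K: "K \<in> S n"
  have "dset K \<subseteq> {1..}" using dset_sub[OF K] by auto
  thus ?thesis using dset_le[OF K] dset_ge[OF K] by auto
qed

lemma diag_iff: "K \<in> S n \<Longrightarrow> (a, a) \<in> K \<longleftrightarrow> 1 \<le> a \<and> a \<le> nd K"
  using dset_eq[of K n] by (auto simp: dset_def set_eq_iff)

lemma lift_S:
  assumes K: "K \<in> S n" and e: "e \<le> 1"
  shows "lift K e \<in> S (Suc n)"
proof (rule S_intro)
  have ndl: "nd K \<le> n" by (rule nd_le[OF K])
  show "lift K e \<subseteq> shifted_staircase (Suc n)"
    using S_sub[OF K] ndl e by (auto simp: lift_def sh_def dg_def P_iff)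
next
  fix x y assume x: "x \<in> lift K e" and y: "y \<in> shifted_staircase (Suc n)"
    and le: "fst y \<le> fst x" "snd y \<le> snd x"
  obtain a b where yab: "y = (a, b)" by (cases y)
  have ab: "1 \<le> a" "a \<le> b" "b \<le> Suc n" using y yab by (auto simp: P_iff)
  show "y \<in> lift K e"
  proof (cases "x \<in> sh K")
    case True
    then obtain i j where ij: "(i, j) \<in> K" and xij: "x = (i, Suc j)" by (auto simp: sh_def)
    have ijP: "1 \<le> i" "i \<le> j" "j \<le> n" using S_sub[OF K] ij by (auto simp: P_iff)
    show ?thesis
    proof (cases "a < b")
      case True
      then obtain b' where b': "b = Suc b'" by (cases b) auto
      have "(a, b') \<in> shifted_staircase n" using ab True b' le xij yab ijP by (auto simp: P_iff)
      hence "(a, b') \<in> K" using S_ideal[OF K ij] le xij yab b' by auto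
      thus ?thesis using yab b' by (auto simp: lift_def sh_def)
    next
      case False
      hence "a = b" using ab by simp
      have "(a, a) \<in> shifted_staircase n" using ab le xij yab ijP by (auto simp: P_iff)
      hence "(a, a) \<in> K" using S_ideal[OF K ij, of "(a, a)"] le xij yab ijP by auto
      hence "a \<le> nd K" using diag_iff[OF K] by auto
      thus ?thesis using yab \<open>a = b\<close> ab by (auto simp: lift_def dg_def)
    qed
  next
    case False
    hence "x \<in> dg (nd K + e)" using x by (auto simp: lift_def)
    then obtain i where i: "1 \<le> i" "i \<le> nd K + e" and xi: "x = (i, i)" by (auto simp: dg_def)
    show ?thesis
    proof (cases "a < b")
      case True
      then obtain b' where b': "b = Suc b'" by (cases b) auto
      have i2: "2 \<le> i" using True le xi yab ab by auto
      have "i - 1 \<le> nd K" using i e by simp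
      hence "(i - 1, i - 1) \<in> K" using diag_iff[OF K] i2 by auto
      moreover have "(a, b') \<in> shifted_staircase n"
        using ab True b' le xi yab nd_le[OF K] \<open>i - 1 \<le> nd K\<close> by (auto simp: P_iff)
      moreover have "a \<le> i - 1" "b' \<le> i - 1" using True le xi yab b' by auto
      ultimately have "(a, b') \<in> K" using S_ideal[OF K, of "(i - 1, i - 1)" "(a, b')"] by simp
      thus ?thesis using yab b' by (auto simp: lift_def sh_def)
    next
      case False
      hence "a = b" using ab by simp
      thus ?thesis using yab ab le xi i by (auto simp: lift_def dg_def)
    qed
  qed
qed

lemma sh_nodiag: "K \<in> S n \<Longrightarrow> (a, a) \<notin> sh K"
  using S_sub by (fastforce simp: sh_def P_iff)

lemma nd_lift: assumes K: "K \<in> S n" shows "nd (lift K e) = nd K + e"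
proof -
  have "dset (lift K e) = {1..nd K + e}"
    using sh_nodiag[OF K] by (auto simp: dset_def lift_def dg_def)
  thus ?thesis by (simp add: nd_def)
qed

lemma unsh_lift: assumes K: "K \<in> S n" shows "unsh (lift K e) = K"
  using S_sub[OF K] by (fastforce simp: unsh_def lift_def sh_def dg_def P_iff)

lemma unsh_S: assumes I: "I \<in> S (Suc n)" shows "unsh I \<in> S n"
proof (rule S_intro)
  show "unsh I \<subseteq> shifted_staircase n" using S_sub[OF I] by (auto simp: unsh_def P_iff)
next
  fix x y assume x: "x \<in> unsh I" and y: "y \<in> shifted_staircase n" "fst y \<le> fst x" "snd y \<le> snd x"
  obtain i j where xij: "x = (i, j)" by (cases x)
  obtain a b where yab: "y = (a, b)" by (cases y)
  have "(i, Suc j) \<in> I" using x xij by (auto simp: unsh_def)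
  moreover have "(a, Suc b) \<in> shifted_staircase (Suc n)" using y yab by (auto simp: P_iff)
  ultimately have "(a, Suc b) \<in> I" using S_ideal[OF I] y xij yab by fastforce
  thus "y \<in> unsh I" using y yab by (auto simp: unsh_def P_iff)
qed

lemma lift_surj:
  assumes I: "I \<in> S (Suc n)"
  shows "nd (unsh I) \<le> nd I" "nd I \<le> nd (unsh I) + 1" "I = lift (unsh I) (nd I - nd (unsh I))"
proof -
  have U: "unsh I \<in> S n" by (rule unsh_S[OF I])
  show 1: "nd (unsh I) \<le> nd I"
  proof (cases "nd (unsh I) = 0")
    case False
    hence "(nd (unsh I), nd (unsh I)) \<in> unsh I" using diag_iff[OF U] by auto
    hence "(nd (unsh I), Suc (nd (unsh I))) \<in> I" by (auto simp: unsh_def)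
    moreover have "(nd (unsh I), nd (unsh I)) \<in> shifted_staircase (Suc n)"
      using nd_le[OF U] False by (auto simp: P_iff)
    ultimately have "(nd (unsh I), nd (unsh I)) \<in> I" using S_ideal[OF I] by fastforce
    thus ?thesis using diag_iff[OF I] by auto
  qed simp
  show 2: "nd I \<le> nd (unsh I) + 1"
  proof (cases "nd I \<le> 1")
    case False
    hence "(nd I, nd I) \<in> I" using diag_iff[OF I] by auto
    moreover have "(nd I - 1, nd I) \<in> shifted_staircase (Suc n)"
      using nd_le[OF I] False by (auto simp: P_iff)
    ultimately have "(nd I - 1, nd I) \<in> I" using S_ideal[OF I] by fastforce
    hence "(nd I - 1, nd I - 1) \<in> unsh I" using False by (auto simp: unsh_def)
    thus ?thesis using diag_iff[OF U] by auto
  qed simp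
  have e: "nd (unsh I) + (nd I - nd (unsh I)) = nd I" using 1 by simp
  show "I = lift (unsh I) (nd I - nd (unsh I))"
    unfolding lift_def e
  proof (intro equalityI subsetI)
    fix x assume x: "x \<in> I"
    obtain i j where xij: "x = (i, j)" by (cases x)
    have ij: "1 \<le> i" "i \<le> j" using S_sub[OF I] x xij by (auto simp: P_iff)
    show "x \<in> sh (unsh I) \<union> dg (nd I)"
    proof (cases "i = j")
      case True
      thus ?thesis using diag_iff[OF I] x xij ij by (auto simp: dg_def)
    next
      case False
      then obtain j' where j': "j = Suc j'" "i \<le> j'" using ij by (cases j) auto
      hence "(i, j') \<in> unsh I" using x xij by (auto simp: unsh_def)
      thus ?thesis using xij j' by (auto simp: sh_def image_iff intro!: bexI[of _ "(i, j')"])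
    qed
  next
    fix x assume "x \<in> sh (unsh I) \<union> dg (nd I)"
    thus "x \<in> I"
    proof
      assume "x \<in> sh (unsh I)"
      then obtain i j where "(i, j) \<in> unsh I" "x = (i, Suc j)" by (auto simp: sh_def)
      thus "x \<in> I" by (simp add: unsh_def)
    next
      assume "x \<in> dg (nd I)"
      then obtain i where "1 \<le> i" "i \<le> nd I" "x = (i, i)" by (auto simp: dg_def)
      thus "x \<in> I" using diag_iff[OF I] by simp
    qed
  qed
qed

lemma lift_bij: "bij_betw (\<lambda>(K, e). lift K e) (S n \<times> {0, 1}) (S (Suc n))"
proof (rule bij_betwI[where g = "\<lambda>I. (unsh I, nd I - nd (unsh I))"])
  show "(\<lambda>(K, e). lift K e) \<in> S n \<times> {0, 1} \<rightarrow> S (Suc n)" using lift_S by auto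
  show "(\<lambda>I. (unsh I, nd I - nd (unsh I))) \<in> S (Suc n) \<rightarrow> S n \<times> {0, 1}"
    using unsh_S lift_surj by fastforce
  show "(\<lambda>I. (unsh I, nd I - nd (unsh I))) ((\<lambda>(K, e). lift K e) x) = x" if "x \<in> S n \<times> {0, 1}" for x
    using that unsh_lift nd_lift by auto
  show "(\<lambda>(K, e). lift K e) ((\<lambda>I. (unsh I, nd I - nd (unsh I))) y) = y" if "y \<in> S (Suc n)" for y
    using that lift_surj(3) by auto
qed

lemma sd_image: "inj f \<Longrightarrow> sd (f ` A) (f ` B) = f ` sd A B"
  by (auto simp: sd_def inj_eq)

lemma card_sd_atLeast: "card (sd {1..a::nat} {1..b}) = nat \<bar>int a - int b\<bar>"
proof (cases "a \<le> b")
  case True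
  hence "sd {1..a} {1..b} = {a<..b}" by (auto simp: sd_def)
  thus ?thesis using True by simp
next
  case False
  hence "sd {1..a} {1..b} = {b<..a}" by (auto simp: sd_def)
  thus ?thesis using False by simp
qed

lemma sd_lift:
  assumes K: "K \<in> S n" and K': "K' \<in> S n"
  shows "card (sd (lift K e) (lift K' e')) = card (sd K K') + nat \<bar>int (nd K + e) - int (nd K' + e')\<bar>"
proof -
  have inj1: "inj (\<lambda>(i::nat, j::nat). (i, Suc j))" by (auto simp: inj_def)
  have inj2: "inj (\<lambda>i::nat. (i, i))" by (auto simp: inj_def)
  have split: "sd (lift K e) (lift K' e') = sd (sh K) (sh K') \<union> sd (dg (nd K + e)) (dg (nd K' + e'))"
    using sh_nodiag[OF K] sh_nodiag[OF K'] by (auto simp: sd_def lift_def dg_def)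
  have disj: "sd (sh K) (sh K') \<inter> sd (dg (nd K + e)) (dg (nd K' + e')) = {}"
    using sh_nodiag[OF K] sh_nodiag[OF K'] by (auto simp: sd_def dg_def)
  have f1: "finite (sd (sh K) (sh K'))"
    using S_finite[OF K] S_finite[OF K'] by (auto simp: sd_def sh_def)
  have f2: "finite (sd (dg (nd K + e)) (dg (nd K' + e')))" by (auto simp: sd_def dg_def)
  have c1: "card (sd (sh K) (sh K')) = card (sd K K')"
    unfolding sh_def sd_image[OF inj1] by (rule card_image) (use inj1 in \<open>auto simp: inj_on_def\<close>)
  have c2: "card (sd (dg (nd K + e)) (dg (nd K' + e'))) = nat \<bar>int (nd K + e) - int (nd K' + e')\<bar>"
    unfolding dg_def sd_image[OF inj2] card_image[OF inj_on_subset[OF inj2 subset_UNIV]]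
    by (rule card_sd_atLeast)
  show ?thesis unfolding split card_Un_disjoint[OF f1 f2 disj] c1 c2 ..
qed

lemma S_finite_set: "finite (S n)"
proof -
  have "S n \<subseteq> Pow (shifted_staircase n)" by (auto simp: S_def order_ideal_def)
  moreover have "finite (Pow (shifted_staircase n))" using finite_P by simp
  ultimately show ?thesis by (rule finite_subset)
qed

lemma sum_lift:
  fixes h :: "(nat \<times> nat) set \<Rightarrow> (nat \<times> nat) set \<Rightarrow> 'b::comm_monoid_add"
  shows "(\<Sum>I\<in>S (Suc n). \<Sum>J\<in>S (Suc n). h I J) =
         (\<Sum>K\<in>S n. \<Sum>K'\<in>S n. \<Sum>e\<in>{0::nat,1}. \<Sum>e'\<in>{0::nat,1}. h (lift K e) (lift K' e'))"
proof -
  have r: "(\<Sum>I\<in>S (Suc n). g I) = (\<Sum>K\<in>S n. \<Sum>e\<in>{0::nat,1}. g (lift K e))" for g :: "_ \<Rightarrow> 'b"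
  proof -
    have "(\<Sum>I\<in>S (Suc n). g I) = (\<Sum>x\<in>S n \<times> {0,1}. g ((\<lambda>(K, e). lift K e) x))"
      by (rule sum.reindex_bij_betw[OF lift_bij, symmetric])
    also have "\<dots> = (\<Sum>K\<in>S n. \<Sum>e\<in>{0::nat,1}. g (lift K e))"
      by (subst sum.cartesian_product) (simp add: case_prod_beta)
    finally show ?thesis .
  qed
  have "(\<Sum>I\<in>S (Suc n). \<Sum>J\<in>S (Suc n). h I J) = (\<Sum>K\<in>S n. \<Sum>e\<in>{0::nat,1}. \<Sum>K'\<in>S n. \<Sum>e'\<in>{0::nat,1}. h (lift K e) (lift K' e'))"
    by (simp only: r)
  also have "\<dots> = (\<Sum>K\<in>S n. \<Sum>K'\<in>S n. \<Sum>e\<in>{0::nat,1}. \<Sum>e'\<in>{0::nat,1}. h (lift K e) (lift K' e'))"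
    by (rule sum.cong[OF refl], rule sum.swap)
  finally show ?thesis .
qed



definition W :: "nat \<Rightarrow> int" where
  "W n = (\<Sum>I\<in>S n. \<Sum>J\<in>S n. int (card (sd I J)))"
definition D :: "nat \<Rightarrow> int" where
  "D n = (\<Sum>I\<in>S n. \<Sum>J\<in>S n. \<bar>int (nd I) - int (nd J)\<bar>)"
definition F :: "nat \<Rightarrow> int \<Rightarrow> int" where
  "F n d = (\<Sum>I\<in>S n. \<Sum>J\<in>S n. if int (nd I) - int (nd J) = d then 1 else 0)"

lemma pw_W:
  assumes "K \<in> S n" "K' \<in> S n"
  shows "(\<Sum>e\<in>{0::nat,1}. \<Sum>e'\<in>{0::nat,1}. int (card (sd (lift K e) (lift K' e')))) =
    4 * int (card (sd K K')) + 4 * \<bar>int (nd K) - int (nd K')\<bar> + 2 * (if int (nd K) - int (nd K') = 0 then 1 else 0)"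
  using assms by (simp add: sd_lift; arith)

lemma pw_D:
  assumes "K \<in> S n" "K' \<in> S n"
  shows "(\<Sum>e\<in>{0::nat,1}. \<Sum>e'\<in>{0::nat,1}. \<bar>int (nd (lift K e)) - int (nd (lift K' e'))\<bar>) =
    4 * \<bar>int (nd K) - int (nd K')\<bar> + 2 * (if int (nd K) - int (nd K') = 0 then 1 else 0)"
  using assms by (simp add: nd_lift; arith)

lemma pw_F:
  assumes "K \<in> S n" "K' \<in> S n"
  shows "(\<Sum>e\<in>{0::nat,1}. \<Sum>e'\<in>{0::nat,1}. (if int (nd (lift K e)) - int (nd (lift K' e')) = d then 1 else 0)) =
    2 * (if int (nd K) - int (nd K') = d then 1 else 0) + (if int (nd K) - int (nd K') = d - 1 then 1 else 0)
    + (if int (nd K) - int (nd K') = d + 1 then 1 else (0::int))"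
  using assms by (simp add: nd_lift; arith)

lemma W_Suc: "W (Suc n) = 4 * W n + 4 * D n + 2 * F n 0"
proof -
  have "W (Suc n) = (\<Sum>K\<in>S n. \<Sum>K'\<in>S n. 4 * int (card (sd K K')) + 4 * \<bar>int (nd K) - int (nd K')\<bar>
        + 2 * (if int (nd K) - int (nd K') = 0 then 1 else 0))"
    unfolding W_def sum_lift by (rule sum.cong[OF refl], rule sum.cong[OF refl], rule pw_W) auto
  also have "\<dots> = 4 * W n + 4 * D n + 2 * F n 0"
    by (simp add: W_def D_def F_def sum.distrib sum_distrib_left)
  finally show ?thesis .
qed

lemma D_Suc: "D (Suc n) = 4 * D n + 2 * F n 0"
proof -
  have "D (Suc n) = (\<Sum>K\<in>S n. \<Sum>K'\<in>S n. 4 * \<bar>int (nd K) - int (nd K')\<bar>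
        + 2 * (if int (nd K) - int (nd K') = 0 then 1 else 0))"
    unfolding D_def sum_lift by (rule sum.cong[OF refl], rule sum.cong[OF refl], rule pw_D) auto
  also have "\<dots> = 4 * D n + 2 * F n 0"
    by (simp add: D_def F_def sum.distrib sum_distrib_left)
  finally show ?thesis .
qed

lemma F_Suc: "F (Suc n) d = 2 * F n d + F n (d - 1) + F n (d + 1)"
proof -
  have "F (Suc n) d = (\<Sum>K\<in>S n. \<Sum>K'\<in>S n.
    2 * (if int (nd K) - int (nd K') = d then 1 else 0) + (if int (nd K) - int (nd K') = d - 1 then 1 else 0)
    + (if int (nd K) - int (nd K') = d + 1 then 1 else (0::int)))"
    unfolding F_def sum_lift by (rule sum.cong[OF refl], rule sum.cong[OF refl], rule pw_F) auto
  also have "\<dots> = 2 * F n d + F n (d - 1) + F n (d + 1)"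
    by (simp add: F_def sum.distrib sum_distrib_left)
  finally show ?thesis .
qed

lemma S0: "S 0 = {{}}"
  by (auto simp: S_def order_ideal_def shifted_staircase_def)

lemma nd_empty: "nd {} = 0" by (simp add: nd_def dset_def)

definition B :: "nat \<Rightarrow> int \<Rightarrow> int" where
  "B n k = (if k < 0 then 0 else int ((2 * n) choose nat k))"

lemma B_step: "B (Suc n) (k + 1) = 2 * B n k + B n (k - 1) + B n (k + 1)"
proof (cases "k < -1")
  case True thus ?thesis by (simp add: B_def)
next
  case False
  show ?thesis
  proof (cases "k = -1")
    case True thus ?thesis by (simp add: B_def)
  next
    case False
    with \<open>\<not> k < -1\<close> have "0 \<le> k" by simp
    then obtain m where m: "k = int m" using nonneg_int_cases by blast
    have e: "2 * Suc n = Suc (Suc (2 * n))" by simp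
    show ?thesis
    proof (cases m)
      case 0 thus ?thesis using m by (simp add: B_def e)
    next
      case (Suc m')
      have "nat (k + 1) = Suc (Suc m')" "nat k = Suc m'" "nat (k - 1) = m'" "nat (k+1) = Suc (Suc m')" using m Suc by auto
      thus ?thesis using m Suc by (simp add: B_def e)
    qed
  qed
qed

lemma F_B: "F n d = B n (int n + d)"
proof (induction n arbitrary: d)
  case 0
  show ?case by (simp add: F_def B_def S0 nd_empty)
next
  case (Suc n)
  have "F (Suc n) d = 2 * B n (int n + d) + B n (int n + d - 1) + B n (int n + d + 1)"
    using Suc by (simp add: F_Suc algebra_simps)
  also have "\<dots> = B (Suc n) (int n + d + 1)" by (simp add: B_step)
  finally show ?case by (simp add: algebra_simps)
qed

lemma F0: "F n 0 = int ((2 * n) choose n)"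
  by (simp add: F_B B_def)

lemma cb: "int (Suc n) * int ((2 * Suc n) choose Suc n) = (4 * int n + 2) * int ((2 * n) choose n)"
proof -
  define a where "a = Suc (Suc (2 * n)) choose Suc n"
  define b where "b = Suc (2 * n) choose n"
  define b' where "b' = Suc (2 * n) choose Suc n"
  define c where "c = (2 * n) choose n"
  have f1: "Suc (Suc (2 * n)) * b = a * Suc n" unfolding a_def b_def by (rule Suc_times_binomial_eq)
  have f2: "Suc (2 * n) * c = b' * Suc n" unfolding b'_def c_def by (rule Suc_times_binomial_eq)
  have f3: "Suc n * b' = Suc n * b" unfolding b'_def b_def
    using Suc_times_binomial_add[of n n] by (simp add: mult_2)
  have bb: "b' = b" using f3 mult_cancel1[of "Suc n" b' b] by simp
  have "a * Suc n = 2 * b * Suc n" using f1 by (simp add: algebra_simps)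
  hence ab: "a = 2 * b" using mult_cancel2[of a "Suc n" "2 * b"] by (simp del: mult_Suc_right)
  have "Suc n * a = 2 * (Suc (2 * n) * c)" using ab f2 bb by simp
  hence "int (Suc n * a) = int (2 * (Suc (2 * n) * c))" by simp
  moreover have "2 * Suc n = Suc (Suc (2 * n))" by simp
  ultimately show ?thesis unfolding a_def c_def by (simp add: algebra_simps)
qed

lemma D_closed: "D n = int n * int ((2 * n) choose n)"
proof (induction n)
  case 0 show ?case by (simp add: D_def S0)
next
  case (Suc n)
  have "D (Suc n) = (4 * int n + 2) * int ((2 * n) choose n)"
    using Suc by (simp add: D_Suc F0 algebra_simps)
  thus ?case using cb[of n] by simp
qed

lemma W_closed: "3 * W n = int n * (2 * int n + 1) * int ((2 * n) choose n)"
proof (induction n)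
  case 0 show ?case by (simp add: W_def S0 sd_def)
next
  case (Suc n)
  define c where "c = int ((2 * n) choose n)"
  have "3 * W (Suc n) = 4 * (3 * W n) + 12 * D n + 6 * F n 0" by (simp add: W_Suc)
  also have "\<dots> = (2 * int n + 3) * ((4 * int n + 2) * c)"
    using Suc by (simp add: D_closed F0 c_def algebra_simps)
  also have "\<dots> = (2 * int n + 3) * (int (Suc n) * int ((2 * Suc n) choose Suc n))"
    using cb[of n] by (simp add: c_def)
  finally show ?case by (simp add: algebra_simps)
qed

lemma wiener_W: "int (wiener (S n) (\<subseteq>)) = W n"
proof -
  have "int (wiener (S n) (\<subseteq>)) = (\<Sum>x\<in>S n \<times> S n. int (case x of (I, J) \<Rightarrow> card (sd I J)))"
    unfolding wiener_sd by (rule of_nat_sum)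
  also have "\<dots> = (\<Sum>(I, J)\<in>S n \<times> S n. int (card (sd I J)))" by (rule sum.cong) auto
  also have "\<dots> = W n" unfolding W_def by (rule sum.cartesian_product[symmetric])
  finally show ?thesis .
qed

lemma c2: "n \<ge> 1 \<Longrightarrow> (2 * n) choose n = 2 * ((2 * n - 1) choose n)"
proof -
  assume n: "n \<ge> 1"
  obtain m where m: "n = Suc m" using n by (cases n) auto
  have e: "2 * n = Suc (2 * n - 1)" using n by simp
  have "(2 * n - 1) choose m = (2 * n - 1) choose (2 * n - 1 - m)"
    using m by (intro binomial_symmetric) simp
  also have "2 * n - 1 - m = n" using m by simp
  finally have "(2 * n - 1) choose m = (2 * n - 1) choose n" .
  moreover have "(2 * n) choose n = ((2 * n - 1) choose m) + ((2 * n - 1) choose n)"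
    by (subst e) (simp add: m)
  ultimately show ?thesis by simp
qed

lemma part1: "real (wiener (S n) (\<subseteq>)) = real (2 * n * (2 * n + 1)) / 3 * real ((2 * n - 1) choose n)"
proof (cases "n = 0")
  case True
  thus ?thesis using wiener_W[of 0] by (simp add: W_def S0 sd_def)
next
  case False
  have "3 * int (wiener (S n) (\<subseteq>)) = int n * (2 * int n + 1) * int (2 * ((2 * n - 1) choose n))"
    using W_closed[of n] wiener_W[of n] c2[of n] False by simp
  hence "3 * real (wiener (S n) (\<subseteq>)) = real n * (2 * real n + 1) * (2 * real ((2 * n - 1) choose n))"
    by (metis (mono_tags, opaque_lifting) of_int_of_nat_eq of_int_mult of_int_add of_int_1 of_nat_mult of_nat_numeral of_int_numeral)
  thus ?thesis by (simp add: field_simps)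
qed



lemma prod_half: "(\<Prod>i = 0..<k. (-1/2 :: real) - of_nat i) * (4 ^ k * fact k) = (-1) ^ k * fact (2 * k)"
proof (induction k)
  case 0 thus ?case by simp
next
  case (Suc k)
  define P where "P = (\<Prod>i = 0..<k. (-1/2 :: real) - of_nat i)"
  have IH: "P * (4 ^ k * fact k) = (-1) ^ k * fact (2 * k)" using Suc by (simp add: P_def)
  have "(\<Prod>i = 0..<Suc k. (-1/2 :: real) - of_nat i) * (4 ^ Suc k * fact (Suc k))
      = (P * (4 ^ k * fact k)) * ((-1/2 - real k) * 4 * (real k + 1))"
    by (simp add: P_def algebra_simps)
  also have "\<dots> = (-1) ^ k * fact (2 * k) * ((-1/2 - real k) * 4 * (real k + 1))" using IH by simp
  also have "\<dots> = (-1) ^ Suc k * fact (2 * Suc k)"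
  proof -
    have f: "fact (2 * Suc k) = (fact (2 * k) :: real) * (2 * real k + 1) * (2 * real k + 2)"
      by (simp add: algebra_simps)
    show ?thesis unfolding f by (simp add: algebra_simps)
  qed
  finally show ?case .
qed

lemma gchoose_half: "((-1/2 :: real) gchoose n) = (-1) ^ n * real ((2 * n) choose n) / 4 ^ n"
proof -
  have "((-1/2 :: real) gchoose n) * fact n * (4 ^ n * fact n) = (-1) ^ n * fact (2 * n)"
    using gbinomial_mult_fact'[of "-1/2 :: real" n] prod_half[of n] by simp
  moreover have "real ((2 * n) choose n) = fact (2 * n) / (fact n * fact n)"
    by (subst binomial_fact) (auto simp: mult_2)
  ultimately have "(fact n * fact n) * (4 ^ n * ((-1/2 :: real) gchoose n)) = (fact n * fact n) * ((-1) ^ n * real ((2 * n) choose n))"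
    by (simp add: field_simps)
  hence "4 ^ n * ((-1/2 :: real) gchoose n) = (-1) ^ n * real ((2 * n) choose n)"
    by (subst (asm) mult_left_cancel) auto
  thus ?thesis by (simp add: field_simps)
qed

lemma central_lim: "(\<lambda>n. real ((2 * n) choose n) * sqrt (real n) / 4 ^ n) \<longlonglongrightarrow> 1 / sqrt pi"
proof -
  have "(\<lambda>n. ((-1/2 :: real) gchoose n) / ((-1)^n / exp ((-1/2 + 1) * of_real (ln (real n))))) \<longlonglongrightarrow>
           inverse (Gamma (- (-1/2 :: real)))"
    by (fact gbinomial_asymptotic[where z = "-1/2 :: real"])
  also have "inverse (Gamma (- (-1/2 :: real))) = 1 / sqrt pi"
  proof -
    have h: "- (-1/2 :: real) = 1/2" by simp
    show ?thesis unfolding h Gamma_one_half_real by (simp add: inverse_eq_divide)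
  qed
  finally have lim: "(\<lambda>n. ((-1/2 :: real) gchoose n) / ((-1)^n / exp ((-1/2 + 1) * of_real (ln (real n))))) \<longlonglongrightarrow> 1 / sqrt pi" .
  show ?thesis
  proof (rule Lim_transform_eventually[OF lim])
    show "\<forall>\<^sub>F n in sequentially. ((-1/2 :: real) gchoose n) / ((-1)^n / exp ((-1/2 + 1) * of_real (ln (real n)))) =
        real ((2 * n) choose n) * sqrt (real n) / 4 ^ n"
      using eventually_gt_at_top[of "0::nat"]
    proof eventually_elim
      fix n :: nat assume n: "n > 0"
      have l: "ln (sqrt (real n)) = ln (real n) / 2" using n by (simp add: ln_sqrt)
      have "exp ((-1/2 + 1) * ln (real n)) = exp (ln (sqrt (real n)))" unfolding l by simp
      also have "\<dots> = sqrt (real n)" using n by simp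
      finally have "exp ((-1/2 + 1) * ln (real n)) = sqrt (real n)" .
      thus "((-1/2 :: real) gchoose n) / ((-1)^n / exp ((-1/2 + 1) * of_real (ln (real n)))) =
        real ((2 * n) choose n) * sqrt (real n) / 4 ^ n"
        unfolding gchoose_half by (simp add: field_simps)
    qed
  qed
qed


lemma closed_real: "real (wiener (S n) (\<subseteq>)) = real n * (2 * real n + 1) * real ((2 * n) choose n) / 3"
proof -
  have "3 * int (wiener (S n) (\<subseteq>)) = int n * (2 * int n + 1) * int ((2 * n) choose n)"
    using W_closed[of n] wiener_W[of n] by simp
  hence "real_of_int (3 * int (wiener (S n) (\<subseteq>))) = real_of_int (int n * (2 * int n + 1) * int ((2 * n) choose n))"
    by (rule arg_cong)
  hence "3 * real (wiener (S n) (\<subseteq>)) = real n * (2 * real n + 1) * real ((2 * n) choose n)" by simp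
  thus ?thesis by simp
qed

lemma part2: "(\<lambda>n::nat. real (wiener (S n) (\<subseteq>)))
             \<sim>[at_top] (\<lambda>n. 2 / (3 * sqrt pi) * 4 ^ n * real n powr (3 / 2))"
proof (rule asymp_equivI')
  define g where "g n = real ((2 * n) choose n) * sqrt (real n) / 4 ^ n" for n :: nat
  have "(\<lambda>n. (1 + 1/2 * (1 / real n)) * sqrt pi * g n) \<longlonglongrightarrow> (1 + 1/2 * 0) * sqrt pi * (1 / sqrt pi)"
    unfolding g_def by (intro tendsto_intros lim_1_over_n central_lim)
  hence lim: "(\<lambda>n. (1 + 1/2 * (1 / real n)) * sqrt pi * g n) \<longlonglongrightarrow> 1" by simp
  show "((\<lambda>n. real (wiener (S n) (\<subseteq>)) / (2 / (3 * sqrt pi) * 4 ^ n * real n powr (3 / 2))) \<longlongrightarrow> 1) at_top"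
  proof (rule Lim_transform_eventually[OF lim])
    show "\<forall>\<^sub>F n in sequentially. (1 + 1/2 * (1 / real n)) * sqrt pi * g n =
        real (wiener (S n) (\<subseteq>)) / (2 / (3 * sqrt pi) * 4 ^ n * real n powr (3 / 2))"
      using eventually_gt_at_top[of "0::nat"]
    proof eventually_elim
      fix n :: nat assume n: "n > 0"
      have p: "real n powr (3 / 2) = real n * sqrt (real n)"
      proof -
        have "real n powr (3 / 2) = real n powr (1 + 1/2)" by simp
        also have "\<dots> = real n powr 1 * real n powr (1/2)" by (rule powr_add)
        also have "\<dots> = real n * sqrt (real n)" using n by (simp add: powr_half_sqrt)
        finally show ?thesis .
      qed
      define x where "x = sqrt (real n)"
      have xpos: "x > 0" using n by (simp add: x_def)
      have nx: "real n = x * x" by (simp add: x_def)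
      have spos: "sqrt pi > 0" by (simp add: pi_gt_zero)
      have qpos: "(4::real) ^ n > 0" by simp
      show "(1 + 1/2 * (1 / real n)) * sqrt pi * g n =
        real (wiener (S n) (\<subseteq>)) / (2 / (3 * sqrt pi) * 4 ^ n * real n powr (3 / 2))"
        unfolding closed_real p unfolding g_def x_def[symmetric] unfolding nx using xpos spos qpos
        by (simp add: field_simps)
    qed
  qed
qed

theorem corollary1p6:
  shows "(\<forall>n::nat. real (wiener (S n) (\<subseteq>)) =
            real (2 * n * (2 * n + 1)) / 3 * real ((2 * n - 1) choose n))
         \<and> (\<lambda>n::nat. real (wiener (S n) (\<subseteq>)))
             \<sim>[at_top] (\<lambda>n. 2 / (3 * sqrt pi) * 4 ^ n * real n powr (3 / 2))"
  using part1 part2 by blast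

end
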